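(* Let $X, Y \subseteq \omega$. There exists an embedding $\mathcal{K}_1^X \hookrightarrow \mathcal{K}_2^Y$ if and only if $X \le_T Y$.
   Context: A pca is a set with a partial binary application operation containing distinct $\mathrm{s},\mathrm{k}$ with $\mathrm{k}ab\downarrow=a$, $\mathrm{s}ab\downarrow$, $\mathrm{s}abc\simeq(ac)(bc)$. An embedding of pcas is an injective map $f$ with: if $ab$ is defined then $f(a)f(b)$ is defined and equals $f(ab)$. $\mathcal{K}_1^X$ is the pca on $\omega$ with $n\cdot m=\Phi^X_n(m)$, the $n$-th partial $X$-computable function applied to $m$. $\mathcal{K}_2^Y$ (in the coding used here): elements are the total $Y$-computable functions $g:\omega\to\omega$, with $g\cdot h$ the function $n\mapsto\Phi^{g\oplus h}_{g(0)}(n)$ ($\Phi_e$ the $e$-th Turing functional, $(g\oplus h)(2n)=g(n)$, $(g\oplus h)(2n+1)=h(n)$), defined if and only if this function is total. *)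

theory Defs
  imports Main "HOL-Library.Nat_Bijection"
begin

text \<open>Oracle mu-recursive programs (function oracles nat => nat), as a concrete
  model of (relativised) Turing computation.\<close>

datatype recf = Z | S | Proj nat | Comp recf "recf list" | Prec recf recf | Mn recf | Orc

primrec code :: "recf \<Rightarrow> nat" where
  "code Z = prod_encode (0, 0)"
| "code S = prod_encode (1, 0)"
| "code (Proj i) = prod_encode (2, i)"
| "code (Comp f gs) = prod_encode (3, prod_encode (code f, list_encode (map code gs)))"
| "code (Prec f g) = prod_encode (4, prod_encode (code f, code g))"
| "code (Mn f) = prod_encode (5, code f)"
| "code Orc = prod_encode (6, 0)"

inductive eval :: "(nat \<Rightarrow> nat) \<Rightarrow> recf \<Rightarrow> nat list \<Rightarrow> nat \<Rightarrow> bool"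
  for A :: "nat \<Rightarrow> nat" where
  eval_Z: "eval A Z xs 0"
| eval_S: "eval A S (x # xs) (Suc x)"
| eval_Proj: "i < length xs \<Longrightarrow> eval A (Proj i) xs (xs ! i)"
| eval_Comp: "length ys = length gs \<Longrightarrow> (\<forall>i < length gs. eval A (gs ! i) xs (ys ! i))
     \<Longrightarrow> eval A f ys z \<Longrightarrow> eval A (Comp f gs) xs z"
| eval_Prec0: "eval A f xs y \<Longrightarrow> eval A (Prec f g) (0 # xs) y"
| eval_PrecS: "eval A (Prec f g) (n # xs) r \<Longrightarrow> eval A g (n # r # xs) y
     \<Longrightarrow> eval A (Prec f g) (Suc n # xs) y"
| eval_Mn: "eval A f (y # xs) 0 \<Longrightarrow> (\<forall>z < y. \<exists>v. 0 < v \<and> eval A f (z # xs) v)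
     \<Longrightarrow> eval A (Mn f) xs y"
| eval_Orc: "eval A Orc (x # xs) (A x)"

text \<open>\<Phi>^A_e(m) = y : the e-th partial A-computable function (Turing functional
  with oracle A) on input m halts with output y. Non-codes give the empty function.\<close>
definition Phi :: "(nat \<Rightarrow> nat) \<Rightarrow> nat \<Rightarrow> nat \<Rightarrow> nat \<Rightarrow> bool" where
  "Phi A e m y \<longleftrightarrow> (\<exists>p. code p = e \<and> eval A p [m] y)"

definition chi :: "nat set \<Rightarrow> nat \<Rightarrow> nat" where
  "chi X n = (if n \<in> X then 1 else 0)"

definition turing_le :: "nat set \<Rightarrow> nat set \<Rightarrow> bool" where
  "turing_le X Y \<longleftrightarrow> (\<exists>e. \<forall>m. Phi (chi Y) e m (chi X m))"

definition join :: "(nat \<Rightarrow> nat) \<Rightarrow> (nat \<Rightarrow> nat) \<Rightarrow> nat \<Rightarrow> nat" where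
  "join g h x = (if even x then g (x div 2) else h (x div 2))"

definition app1 :: "nat set \<Rightarrow> nat \<Rightarrow> nat \<Rightarrow> nat option" where
  "app1 X n m = (if \<exists>y. Phi (chi X) n m y then Some (THE y. Phi (chi X) n m y) else None)"

definition K2_carrier :: "nat set \<Rightarrow> (nat \<Rightarrow> nat) set" where
  "K2_carrier Y = {g. \<exists>e. \<forall>n. Phi (chi Y) e n (g n)}"

definition app2 :: "(nat \<Rightarrow> nat) \<Rightarrow> (nat \<Rightarrow> nat) \<Rightarrow> (nat \<Rightarrow> nat) option" where
  "app2 g h = (if \<forall>n. \<exists>y. Phi (join g h) (g 0) n y
     then Some (\<lambda>n. THE y. Phi (join g h) (g 0) n y) else None)"

definition embedding_K1_K2 :: "nat set \<Rightarrow> nat set \<Rightarrow> (nat \<Rightarrow> (nat \<Rightarrow> nat)) \<Rightarrow> bool" where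
  "embedding_K1_K2 X Y f \<longleftrightarrow>
     (\<forall>n. f n \<in> K2_carrier Y) \<and> inj f \<and>
     (\<forall>a b c. app1 X a b = Some c \<longrightarrow> app2 (f a) (f b) = Some (f c))"

end

theory Submission
  imports Defs
begin


datatype ex = Var nat | Num nat | Add ex ex | Sub ex ex | Mul ex ex | Orac ex
  | Rec ex ex ex | Call ex "ex list"

primrec ev :: "(nat \<Rightarrow> nat) \<Rightarrow> nat list \<Rightarrow> ex \<Rightarrow> nat" where
  "ev A env (Var i) = (if i < length env then env ! i else 0)"
| "ev A env (Num n) = n"
| "ev A env (Add a b) = ev A env a + ev A env b"
| "ev A env (Sub a b) = ev A env a - ev A env b"
| "ev A env (Mul a b) = ev A env a * ev A env b"
| "ev A env (Orac a) = A (ev A env a)"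
| "ev A env (Rec n b s) = rec_nat (ev A env b) (\<lambda>i r. ev A (i # r # env) s) (ev A env n)"
| "ev A env (Call f as) = ev A (map (ev A env) as) f"

primrec numprog :: "nat \<Rightarrow> recf" where
  "numprog 0 = Z"
| "numprog (Suc n) = Comp S [numprog n]"

definition "addp = Prec (Proj 0) (Comp S [Proj 1])"
definition "predp = Prec Z (Proj 0)"
definition "subp = Prec (Proj 0) (Comp predp [Proj 1])"
definition "mulp = Prec Z (Comp addp [Proj 1, Proj 2])"

primrec cmp :: "nat \<Rightarrow> ex \<Rightarrow> recf" where
  "cmp k (Var i) = (if i < k then Proj i else Z)"
| "cmp k (Num n) = numprog n"
| "cmp k (Add a b) = Comp addp [cmp k a, cmp k b]"
| "cmp k (Sub a b) = Comp subp [cmp k b, cmp k a]"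
| "cmp k (Mul a b) = Comp mulp [cmp k a, cmp k b]"
| "cmp k (Orac a) = Comp Orc [cmp k a]"
| "cmp k (Rec n b s) = Comp (Prec (cmp k b) (cmp (Suc (Suc k)) s)) (cmp k n # map Proj [0..<k])"
| "cmp k (Call f as) = Comp (cmp (length as) f) (map (cmp k) as)"

lemma eval_proj': "i < length xs \<Longrightarrow> y = xs ! i \<Longrightarrow> eval A (Proj i) xs y"
  by (auto intro: eval.intros)

lemmas evI = eval.intros eval_proj'

lemma eval_comp1: "eval A g xs y \<Longrightarrow> eval A f [y] z \<Longrightarrow> eval A (Comp f [g]) xs z"
  by (rule eval_Comp[of "[y]"]) auto

lemma eval_comp2: "eval A g1 xs y1 \<Longrightarrow> eval A g2 xs y2 \<Longrightarrow> eval A f [y1, y2] z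
   \<Longrightarrow> eval A (Comp f [g1, g2]) xs z"
  by (rule eval_Comp[of "[y1, y2]"]) (auto simp: less_Suc_eq nth_Cons')

lemma eval_numprog: "eval A (numprog n) xs n"
  by (induct n) (auto intro: evI eval_comp1)

lemma eval_addp: "eval A addp [n, x] (n + x)"
  unfolding addp_def
proof (induct n)
  case 0 then show ?case by (auto intro!: evI)
next
  case (Suc n) then show ?case
    by (auto intro!: evI eval_comp1)
qed

lemma eval_predp: "eval A predp [n] (n - 1)"
  unfolding predp_def
proof (induct n)
  case 0 then show ?case by (auto intro!: evI)
next
  case (Suc n) then show ?case by (auto intro!: eval_PrecS[OF Suc] evI)
qed

lemma eval_subp: "eval A subp [b, a] (a - b)"
  unfolding subp_def
proof (induct b)
  case 0 then show ?case by (auto intro!: evI)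
next
  case (Suc n)
  have "eval A (Comp predp [Proj 1]) [n, a - n, a] (a - n - 1)"
    by (rule eval_comp1[OF _ eval_predp]) (auto intro: evI)
  from eval_PrecS[OF Suc this] show ?case by simp
qed

lemma eval_mulp: "eval A mulp [n, x] (n * x)"
  unfolding mulp_def
proof (induct n)
  case 0 then show ?case by (auto intro!: evI)
next
  case (Suc n)
  have "eval A (Comp addp [Proj 1, Proj 2]) [n, n * x, x] (n * x + x)"
    by (rule eval_comp2[OF _ _ eval_addp]) (auto intro: evI)
  from eval_PrecS[OF Suc this] show ?case by (simp add: add.commute)
qed

lemma cmp_correct: "length env = k \<Longrightarrow> eval A (cmp k e) env (ev A env e)"
proof (induct e arbitrary: k env)
  case (Var i) then show ?case by (auto intro: evI)
next
  case (Num n) then show ?case by (auto intro: eval_numprog)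
next
  case (Add a b) then show ?case by (auto intro: eval_comp2 eval_addp)
next
  case (Sub a b) then show ?case by (auto intro: eval_comp2 eval_subp)
next
  case (Mul a b) then show ?case by (auto intro: eval_comp2 eval_mulp)
next
  case (Orac a) then show ?case by (auto intro: eval_comp1 eval.intros)
next
  case (Rec n b s)
  let ?R = "rec_nat (ev A env b) (\<lambda>i r. ev A (i # r # env) s)"
  have P: "eval A (Prec (cmp k b) (cmp (Suc (Suc k)) s)) (m # env) (?R m)" for m
  proof (induct m)
    case 0 then show ?case using Rec by (auto intro: evI)
  next
    case (Suc m) 
    have "eval A (cmp (Suc (Suc k)) s) (m # ?R m # env) (ev A (m # ?R m # env) s)"
      using Rec(3)[of "m # ?R m # env" "Suc (Suc k)"] Rec(4) by simp
    from eval_PrecS[OF Suc this] show ?case by simp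
  qed
  show ?case
    apply simp
    apply (rule eval_Comp[where ys="ev A env n # env"])
    using Rec P by (auto simp: nth_Cons' intro: evI)
next
  case (Call f as)
  show ?case
    apply simp
    apply (rule eval_Comp[where ys="map (ev A env) as"])
    using Call(2) Call(3) Call(1)[of "map (ev A env) as"] by auto
qed



inductive_cases ZE: "eval A Z xs y"
inductive_cases SE: "eval A S xs y"
inductive_cases ProjE: "eval A (Proj i) xs y"
inductive_cases CompE: "eval A (Comp f gs) xs y"
inductive_cases PrecE: "eval A (Prec f g) xs y"
inductive_cases MnE: "eval A (Mn f) xs y"
inductive_cases OrcE: "eval A Orc xs y"

lemma eval_det: "eval A p xs y \<Longrightarrow> eval A p xs y' \<Longrightarrow> y = y'"
proof (induct arbitrary: y' rule: eval.induct)
  case (eval_Z xs) then show ?case by (auto elim: ZE)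
next
  case (eval_S x xs) then show ?case by (auto elim: SE)
next
  case (eval_Proj i xs) then show ?case by (auto elim: ProjE)
next
  case (eval_Comp ys gs xs f z)
  from eval_Comp.prems obtain ys' where Y: "length ys' = length gs"
    "\<forall>i<length gs. eval A (gs ! i) xs (ys' ! i)" "eval A f ys' y'"
    by (auto elim: CompE)
  have "ys' = ys"
  proof (rule nth_equalityI)
    show "length ys' = length ys" using Y eval_Comp.hyps(1) by simp
    fix i assume "i < length ys'"
    then show "ys' ! i = ys ! i" using Y eval_Comp.hyps(1,2) by metis
  qed
  then show ?case using Y eval_Comp.hyps(4) by auto
next
  case (eval_Prec0 f xs y g) 
  from eval_Prec0.prems have "eval A f xs y'" by (cases rule: PrecE) auto
  then show ?case using eval_Prec0.hyps by auto
next
  case (eval_PrecS f g n xs r y)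
  from eval_PrecS.prems obtain r' where "eval A (Prec f g) (n # xs) r'" "eval A g (n # r' # xs) y'"
    by (cases rule: PrecE) auto
  then show ?case using eval_PrecS.hyps(2,4) by auto
next
  case (eval_Mn f y xs)
  from eval_Mn.prems have M1: "eval A f (y' # xs) 0"
    by (rule MnE) 
  from eval_Mn.prems have M2: "\<forall>z<y'. \<exists>v. 0 < v \<and> eval A f (z # xs) v"
    by (rule MnE) 
  note M = M1 M2
  show ?case
  proof (rule ccontr)
    assume "y \<noteq> y'"
    then consider "y < y'" | "y' < y" by arith
    then show False
    proof cases
      case 1
      with M obtain v where "0 < v" "eval A f (y # xs) v" by auto
      with eval_Mn.hyps(2) show False by auto
    next
      case 2
      with eval_Mn.hyps(3) obtain v where "0 < v" "eval A f (y' # xs) v"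
          "\<forall>w. eval A f (y' # xs) w \<longrightarrow> v = w" by blast
      with M show False by auto
    qed
  qed
next
  case (eval_Orc x xs) then show ?case by (auto elim: OrcE)
qed

lemma code_inj: "code p = code q \<Longrightarrow> p = q"
proof (induct p arbitrary: q)
  case Z then show ?case by (cases q) simp_all
next
  case S then show ?case by (cases q) simp_all
next
  case (Proj i) then show ?case by (cases q) simp_all
next
  case (Comp f gs)
  show ?case
  proof (cases q)
    case (Comp f' gs')
    with Comp.prems have "code f = code f'" "map code gs = map code gs'"
      by (simp_all add: list_encode_eq)
    then have "f = f'" "gs = gs'" using Comp.hyps list.inj_map_strong by metis+
    then show ?thesis using Comp by simp
  qed (use Comp.prems in simp_all)
next
  case (Prec f g) then show ?case by (cases q) simp_all
next
  case (Mn f) then show ?case by (cases q) simp_all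
next
  case Orc then show ?case by (cases q) simp_all
qed

lemma Phi_det: "Phi A e m y \<Longrightarrow> Phi A e m y' \<Longrightarrow> y = y'"
  unfolding Phi_def using code_inj eval_det by blast



definition bt :: "bool \<Rightarrow> nat" where "bt P = (if P then 1 else 0)"

lemma bit_simps[simp]: "bt P = 0 \<longleftrightarrow> \<not> P" "bt P \<noteq> 0 \<longleftrightarrow> P" "0 < bt P \<longleftrightarrow> P"
  "bt P = 1 \<longleftrightarrow> P" by (auto simp: bt_def)

definition "sgE e = Sub (Num 1) (Sub (Num 1) e)"
definition "notE e = Sub (Num 1) e"
definition "andE a b = sgE (Mul a b)"
definition "orE a b = sgE (Add a b)"
definition "eqE a b = notE (Add (Sub a b) (Sub b a))"
definition "ltE a b = sgE (Sub b a)"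
definition "leE a b = notE (Sub a b)"
definition "iteE c a b = Add (Mul (sgE c) a) (Mul (notE c) b)"

lemma ev_sgE[simp]: "ev A env (sgE e) = bt (ev A env e \<noteq> 0)"
  by (simp add: sgE_def bt_def)
lemma ev_notE[simp]: "ev A env (notE e) = bt (ev A env e = 0)"
  by (simp add: notE_def bt_def)
lemma ev_andE[simp]: "ev A env (andE a b) = bt (ev A env a \<noteq> 0 \<and> ev A env b \<noteq> 0)"
  by (simp add: andE_def)
lemma ev_orE[simp]: "ev A env (orE a b) = bt (ev A env a \<noteq> 0 \<or> ev A env b \<noteq> 0)"
  by (simp add: orE_def)
lemma ev_eqE[simp]: "ev A env (eqE a b) = bt (ev A env a = ev A env b)"
  by (auto simp: eqE_def bt_def)
lemma ev_ltE[simp]: "ev A env (ltE a b) = bt (ev A env a < ev A env b)"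
  by (auto simp: ltE_def bt_def)
lemma ev_leE[simp]: "ev A env (leE a b) = bt (ev A env a \<le> ev A env b)"
  by (auto simp: leE_def bt_def)
lemma ev_iteE[simp]: "ev A env (iteE c a b) = (if ev A env c \<noteq> 0 then ev A env a else ev A env b)"
  by (simp add: iteE_def bt_def)

definition "triE e = Call (Rec (Var 0) (Num 0) (Add (Var 1) (Add (Var 0) (Num 1)))) [e]"

lemma rec_tri: "rec_nat 0 (\<lambda>i r. Suc (r + i)) n = triangle n"
  by (induct n) auto

lemma ev_triE[simp]: "ev A env (triE e) = triangle (ev A env e)"
  by (simp add: triE_def rec_tri)

definition "peE a b = Add (triE (Add a b)) a"

lemma ev_peE[simp]: "ev A env (peE a b) = prod_encode (ev A env a, ev A env b)"
  by (simp add: peE_def prod_encode_def)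

definition "cntE k = Call (Rec (Var 0) (Num 0) (Add (Var 1) (leE (triE (Add (Var 0) (Num 1))) (Var 2)))) [k]"

lemma triangle_mono: "a \<le> b \<Longrightarrow> triangle a \<le> triangle b"
  by (induct b) (auto simp: le_Suc_eq)

lemma le_triangle: "x \<le> triangle x"
  by (induct x) auto

lemma tri_le_iff:
  assumes "m \<le> T"
  shows "triangle (Suc j) \<le> triangle T + m \<longleftrightarrow> Suc j \<le> T"
proof
  assume "Suc j \<le> T" then show "triangle (Suc j) \<le> triangle T + m"
    using triangle_mono[of "Suc j" T] by linarith
next
  assume a: "triangle (Suc j) \<le> triangle T + m"
  show "Suc j \<le> T"
  proof (rule ccontr)
    assume "\<not> Suc j \<le> T"
    then have "Suc T \<le> Suc j" by simp
    then have "triangle (Suc T) \<le> triangle (Suc j)" by (rule triangle_mono)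
    moreover have "triangle (Suc T) = triangle T + Suc T" by (rule triangle_Suc)
    ultimately show False using a assms by linarith
  qed
qed

lemma cnt_aux:
  assumes "m \<le> T"
  shows "rec_nat 0 (\<lambda>i r. r + bt (triangle (Suc i) \<le> triangle T + m)) j = min j T"
proof (induct j)
  case 0 then show ?case by simp
next
  case (Suc j)
  have "rec_nat 0 (\<lambda>i r. r + bt (triangle (Suc i) \<le> triangle T + m)) (Suc j)
     = min j T + bt (triangle (Suc j) \<le> triangle T + m)"
    using Suc by (simp del: triangle_Suc)
  also have "\<dots> = min (Suc j) T" unfolding tri_le_iff[OF assms] by (simp add: bt_def)
  finally show ?case .
qed

lemma ev_cntE0: "ev A env (cntE k) = rec_nat 0 (\<lambda>i r. r + bt (triangle (Suc i) \<le> ev A env k)) (ev A env k)"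
  by (simp add: cntE_def)

lemma pd_tri: "prod_decode k = (m, n) \<Longrightarrow> k = triangle (m + n) + m"
proof -
  assume "prod_decode k = (m, n)"
  then have "prod_encode (m, n) = k" using prod_decode_inverse by metis
  then show ?thesis by (simp add: prod_encode_def)
qed

lemma ev_cntE: "ev A env (cntE k) = fst (prod_decode (ev A env k)) + snd (prod_decode (ev A env k))"
proof -
  obtain m n where mn: "prod_decode (ev A env k) = (m, n)" by (cases "prod_decode (ev A env k)")
  then have k: "ev A env k = triangle (m + n) + m" by (rule pd_tri)
  have le: "m + n \<le> ev A env k" using k le_triangle[of "m+n"] by simp
  have "ev A env (cntE k) = min (ev A env k) (m + n)"
    unfolding ev_cntE0 k using cnt_aux[of m "m + n"] by simp
  also have "\<dots> = m + n" using le by simp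
  finally show ?thesis using mn by simp
qed

definition "pfE k = Call (Sub (Var 0) (triE (cntE (Var 0)))) [k]"
definition "psE k = Call (Sub (cntE (Var 0)) (pfE (Var 0))) [k]"

lemma ev_pfE[simp]: "ev A env (pfE k) = fst (prod_decode (ev A env k))"
proof -
  obtain m n where mn: "prod_decode (ev A env k) = (m, n)" by (cases "prod_decode (ev A env k)")
  then have k: "ev A env k = triangle (m + n) + m" by (rule pd_tri)
  have "ev A env (pfE k) = ev A env k - triangle (ev A env (cntE k))" by (simp add: pfE_def ev_cntE)
  then show ?thesis using mn k by (simp add: ev_cntE)
qed

lemma ev_psE[simp]: "ev A env (psE k) = snd (prod_decode (ev A env k))"
  by (simp add: psE_def ev_cntE)



definition "lhd v = fst (prod_decode (v - 1))"
definition "ltl v = snd (prod_decode (v - 1))"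

lemma lhd_Suc[simp]: "lhd (Suc (prod_encode (x, y))) = x" by (simp add: lhd_def)
lemma lhd_enc[simp]: "lhd (list_encode (x # xs)) = x" by (simp add: lhd_def)
lemma pd0: "prod_decode 0 = (0, 0)"
  using prod_encode_inverse[of "(0,0)"] by (simp add: prod_encode_def)

lemma ltl_enc[simp]: "ltl (list_encode xs) = list_encode (tl xs)"
  by (cases xs) (auto simp: ltl_def pd0)

definition "hdE L = pfE (Sub L (Num 1))"
definition "tlE L = psE (Sub L (Num 1))"
lemma ev_hdE[simp]: "ev A env (hdE L) = lhd (ev A env L)" by (simp add: hdE_def lhd_def)
lemma ev_tlE[simp]: "ev A env (tlE L) = ltl (ev A env L)" by (simp add: tlE_def ltl_def)

definition "consE x L = Add (peE x L) (Num 1)"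
lemma ev_consE[simp]: "ev A env (consE x L) = list_encode (ev A env x # list_decode (ev A env L))"
  by (simp add: consE_def)

definition "tliE j L = Call (Rec (Var 0) (Var 1) (tlE (Var 1))) [j, L]"

lemma rec_tl: "rec_nat (list_encode xs) (\<lambda>i r. ltl r) j = list_encode (drop j xs)"
  by (induct j) (auto simp: drop_Suc tl_drop)

lemma ev_tliE[simp]: "ev A env (tliE j L) = list_encode (drop (ev A env j) (list_decode (ev A env L)))"
  using rec_tl[of "list_decode (ev A env L)"] by (simp add: tliE_def)

lemma length_le_enc: "length xs \<le> list_encode xs"
proof (induct xs)
  case (Cons x xs)
  then show ?case using le_prod_encode_2[of "list_encode xs" x] by simp
qed simp

definition "lenE L = Call (Rec (Var 0) (Num 0) (Add (Var 1) (sgE (tliE (Var 0) (Var 2))))) [L]"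

lemma rec_len: "rec_nat 0 (\<lambda>i r. r + bt (list_encode (drop i xs) \<noteq> 0)) j = min j (length xs)"
proof (induct j)
  case (Suc j)
  have "list_encode (drop j xs) \<noteq> 0 \<longleftrightarrow> j < length xs"
    by (metis drop_eq_Nil list_encode.simps(1) list_encode_eq not_le)
  with Suc show ?case by (auto simp: bt_def)
qed simp

lemma ev_lenE[simp]: "ev A env (lenE L) = length (list_decode (ev A env L))"
proof -
  let ?xs = "list_decode (ev A env L)"
  have "ev A env (lenE L) = rec_nat 0 (\<lambda>i r. r + bt (list_encode (drop i ?xs) \<noteq> 0)) (list_encode ?xs)"
    by (simp add: lenE_def)
  also have "\<dots> = length ?xs" using rec_len length_le_enc[of ?xs] by simp
  finally show ?thesis .
qed

definition "nthE L j = hdE (tliE j L)"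
lemma ev_nthE: "ev A env j < length (list_decode (ev A env L)) \<Longrightarrow>
   ev A env (nthE L j) = list_decode (ev A env L) ! ev A env j"
  by (simp add: nthE_def hd_drop_conv_nth flip: Cons_nth_drop_Suc)

definition vars :: "nat \<Rightarrow> nat \<Rightarrow> ex list" where "vars k m = map (\<lambda>i. Var (i + k)) [0..<m]"

lemma map_ev_vars: "length pre = k \<Longrightarrow> map (ev A (pre @ ps)) (vars k (length ps)) = ps"
  by (auto simp: vars_def nth_append intro!: nth_equalityI)

lemma length_vars[simp]: "length (vars k m) = m" by (simp add: vars_def)

definition "allE n P ps = Call (Rec (Var 0) (Num 1) (andE (Var 1) (Call P (Var 0 # vars 3 (length ps))))) (n # ps)"
definition "exE n P ps = Call (Rec (Var 0) (Num 0) (orE (Var 1) (Call P (Var 0 # vars 3 (length ps))))) (n # ps)"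

lemma ev_allE[simp]: "ev A env (allE n P ps) = bt (\<forall>z < ev A env n. ev A (z # map (ev A env) ps) P \<noteq> 0)"
proof -
  let ?ps = "map (ev A env) ps"
  have m: "map (ev A ([i, r, ev A env n] @ ?ps)) (vars 3 (length ?ps)) = ?ps" for i r
    by (rule map_ev_vars) simp
  have "rec_nat 1 (\<lambda>i r. bt (r \<noteq> 0 \<and> ev A (i # ?ps) P \<noteq> 0)) k = bt (\<forall>z < k. ev A (z # ?ps) P \<noteq> 0)" for k
    by (induct k) (auto simp: bt_def less_Suc_eq)
  then show ?thesis using m by (simp add: allE_def)
qed

lemma ev_exE[simp]: "ev A env (exE n P ps) = bt (\<exists>z < ev A env n. ev A (z # map (ev A env) ps) P \<noteq> 0)"
proof -
  let ?ps = "map (ev A env) ps"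
  have m: "map (ev A ([i, r, ev A env n] @ ?ps)) (vars 3 (length ?ps)) = ?ps" for i r
    by (rule map_ev_vars) simp
  have "rec_nat 0 (\<lambda>i r. bt (r \<noteq> 0 \<or> ev A (i # ?ps) P \<noteq> 0)) k = bt (\<exists>z < k. ev A (z # ?ps) P \<noteq> 0)" for k
    by (induct k) (auto simp: bt_def less_Suc_eq)
  then show ?thesis using m by (simp add: exE_def)
qed

lemma ex_nth_iff: "(\<exists>z<length xs. Q (xs ! z)) \<longleftrightarrow> (\<exists>E\<in>set xs. Q E)"
  by (metis in_set_conv_nth)

definition "memE L P ps = exE (lenE L) (Call P (nthE (Var 1) (Var 0) # vars 2 (length ps))) (L # ps)"

lemma ev_memE[simp]: "ev A env (memE L P ps) =
   bt (\<exists>E \<in> set (list_decode (ev A env L)). ev A (E # map (ev A env) ps) P \<noteq> 0)"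
proof -
  let ?ps = "map (ev A env) ps" and ?xs = "list_decode (ev A env L)"
  have m: "map (ev A ([z, ev A env L] @ ?ps)) (vars 2 (length ?ps)) = ?ps" for z
    by (rule map_ev_vars) simp
  have n: "z < length ?xs \<Longrightarrow> ev A (z # ev A env L # ?ps) (nthE (Var 1) (Var 0)) = ?xs ! z" for z
    by (subst ev_nthE) auto
  have c: "z < length ?xs \<Longrightarrow> ev A (z # map (ev A env) (L # ps))
       (Call P (nthE (Var 1) (Var 0) # vars 2 (length ps))) = ev A (?xs ! z # ?ps) P" for z
    using m[of z] n[of z] by (simp only: ev.simps(8) list.map) simp
  have "ev A env (memE L P ps) = bt (\<exists>z < length ?xs. ev A (?xs ! z # ?ps) P \<noteq> 0)"
    unfolding memE_def ev_exE ev_lenE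
  proof (rule arg_cong[where f = bt], rule iffI)
    assume "\<exists>z<length ?xs. ev A (z # map (ev A env) (L # ps)) (Call P (nthE (Var 1) (Var 0) # vars 2 (length ps))) \<noteq> 0"
    then obtain z where "z < length ?xs" "ev A (z # map (ev A env) (L # ps)) (Call P (nthE (Var 1) (Var 0) # vars 2 (length ps))) \<noteq> 0" by blast
    then show "\<exists>z<length ?xs. ev A (?xs ! z # ?ps) P \<noteq> 0" using c by metis
  next
    assume "\<exists>z<length ?xs. ev A (?xs ! z # ?ps) P \<noteq> 0"
    then obtain z where "z < length ?xs" "ev A (?xs ! z # ?ps) P \<noteq> 0" by blast
    then show "\<exists>z<length ?xs. ev A (z # map (ev A env) (L # ps)) (Call P (nthE (Var 1) (Var 0) # vars 2 (length ps))) \<noteq> 0" using c by metis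
  qed
  also have "\<dots> = bt (\<exists>E \<in> set ?xs. ev A (E # ?ps) P \<noteq> 0)"
    by (rule arg_cong[where f = bt], rule ex_nth_iff)
  finally show ?thesis .
qed



abbreviation "pf k \<equiv> fst (prod_decode k)"
abbreviation "ps k \<equiv> snd (prod_decode k)"

definition "ent l c a y h = prod_encode (l, prod_encode (c, prod_encode (a, prod_encode (y, h))))"
definition "el E = pf E"
definition "ec E = pf (ps E)"
definition "ea E = pf (ps (ps E))"
definition "ey E = pf (ps (ps (ps E)))"
definition "eh E = ps (ps (ps (ps E)))"

lemma ent_dec[simp]: "el (ent l c a y h) = l" "ec (ent l c a y h) = c" "ea (ent l c a y h) = a"
  "ey (ent l c a y h) = y" "eh (ent l c a y h) = h"
  by (simp_all add: ent_def el_def ec_def ea_def ey_def eh_def)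

lemma ent_surj: "ent (el E) (ec E) (ea E) (ey E) (eh E) = E"
  by (simp add: ent_def el_def ec_def ea_def ey_def eh_def)

definition "q1 q = pf (ps q)"
definition "q2 q = pf (ps (ps q))"
definition "q3 q = ps (ps (ps q))"

definition has :: "nat \<Rightarrow> nat \<Rightarrow> nat \<Rightarrow> nat \<Rightarrow> nat \<Rightarrow> bool" where
  "has R l c a y \<longleftrightarrow> (\<exists>E\<in>set (list_decode R). el E = l \<and> ec E = c \<and> ea E = a \<and> ey E = y)"

definition hasp :: "nat \<Rightarrow> nat \<Rightarrow> nat \<Rightarrow> nat \<Rightarrow> bool" where
  "hasp R l c a \<longleftrightarrow> (\<exists>E\<in>set (list_decode R). el E = l \<and> ec E = c \<and> ea E = a \<and> 0 < ey E)"

definition just :: "(nat \<Rightarrow> nat) \<Rightarrow> (nat \<Rightarrow> nat \<Rightarrow> nat) \<Rightarrow> nat \<Rightarrow> nat \<Rightarrow> nat \<Rightarrow> nat \<Rightarrow> nat \<Rightarrow> nat \<Rightarrow> bool" where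
  "just A rs l c a y h R \<longleftrightarrow>
    (pf c = 0 \<and> y = 0) \<or>
    (pf c = 1 \<and> list_decode a \<noteq> [] \<and> y = Suc (hd (list_decode a))) \<or>
    (pf c = 2 \<and> ps c < length (list_decode a) \<and> y = list_decode a ! ps c) \<or>
    (pf c = 3 \<and> length (list_decode h) = length (list_decode (ps (ps c))) \<and>
       (\<forall>j < length (list_decode (ps (ps c))). has R l (list_decode (ps (ps c)) ! j) a (list_decode h ! j)) \<and>
       has R l (pf (ps c)) h y) \<or>
    (pf c = 4 \<and> list_decode a \<noteq> [] \<and> hd (list_decode a) = 0 \<and>
       has R l (pf (ps c)) (list_encode (tl (list_decode a))) y) \<or>
    (pf c = 4 \<and> list_decode a \<noteq> [] \<and> hd (list_decode a) \<noteq> 0 \<and>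
       has R l c (list_encode ((hd (list_decode a) - 1) # tl (list_decode a))) h \<and>
       has R l (ps (ps c)) (list_encode ((hd (list_decode a) - 1) # h # tl (list_decode a))) y) \<or>
    (pf c = 5 \<and> has R l (ps c) (list_encode (y # list_decode a)) 0 \<and>
       (\<forall>z<y. hasp R l (ps c) (list_encode (z # list_decode a)))) \<or>
    (pf c = 6 \<and> list_decode a \<noteq> [] \<and> pf (rs l (hd (list_decode a))) = 0 \<and>
       y = A (ps (rs l (hd (list_decode a))))) \<or>
    (pf c = 6 \<and> list_decode a \<noteq> [] \<and> pf (rs l (hd (list_decode a))) \<noteq> 0 \<and>
       has R (q1 (rs l (hd (list_decode a)))) (q2 (rs l (hd (list_decode a))))
         (list_encode [q3 (rs l (hd (list_decode a)))]) y)"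

definition "justE A rs E R = just A rs (el E) (ec E) (ea E) (ey E) (eh E) R"

definition valid :: "(nat \<Rightarrow> nat) \<Rightarrow> (nat \<Rightarrow> nat \<Rightarrow> nat) \<Rightarrow> nat list \<Rightarrow> bool" where
  "valid A rs es \<longleftrightarrow> (\<forall>i<length es. justE A rs (es ! i) (list_encode (drop (Suc i) es)))"

lemma valid_Nil[simp]: "valid A rs []" by (simp add: valid_def)

lemma valid_Cons: "valid A rs (E # es) \<longleftrightarrow> justE A rs E (list_encode es) \<and> valid A rs es"
  by (auto simp: valid_def less_Suc_eq_0_disj)

lemma has_mono: "has (list_encode es) l c a y \<Longrightarrow> set es \<subseteq> set es' \<Longrightarrow> has (list_encode es') l c a y"
  unfolding has_def by auto

lemma hasp_mono: "hasp (list_encode es) l c a \<Longrightarrow> set es \<subseteq> set es' \<Longrightarrow> hasp (list_encode es') l c a"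
  unfolding hasp_def by auto

lemma just_mono: "just A rs l c a y h (list_encode es) \<Longrightarrow> set es \<subseteq> set es' \<Longrightarrow> just A rs l c a y h (list_encode es')"
  unfolding just_def
  apply (elim disjE)
  using has_mono hasp_mono by (simp_all; blast)+

lemma justE_mono: "justE A rs E (list_encode es) \<Longrightarrow> set es \<subseteq> set es' \<Longrightarrow> justE A rs E (list_encode es')"
  unfolding justE_def by (rule just_mono)

lemma valid_append: "valid A rs es1 \<Longrightarrow> valid A rs es2 \<Longrightarrow> valid A rs (es1 @ es2)"
proof (induct es1)
  case (Cons E es)
  then have "justE A rs E (list_encode es)" "valid A rs (es @ es2)" by (auto simp: valid_Cons)
  then show ?case by (auto simp: valid_Cons intro: justE_mono)
qed simp

lemma valid_concat: "(\<And>es. es \<in> set ess \<Longrightarrow> valid A rs es) \<Longrightarrow> valid A rs (concat ess)"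
  by (induct ess) (auto intro: valid_append)

lemma valid_dup: "valid A rs es \<Longrightarrow> E \<in> set es \<Longrightarrow> valid A rs (E # es)"
proof -
  assume v: "valid A rs es" and "E \<in> set es"
  then obtain i where i: "i < length es" "es ! i = E" by (auto simp: in_set_conv_nth)
  then have "justE A rs E (list_encode (drop (Suc i) es))" using v by (auto simp: valid_def)
  then have "justE A rs E (list_encode es)" by (rule justE_mono) (simp add: set_drop_subset)
  then show ?thesis using v by (simp add: valid_Cons)
qed



definition sound :: "(nat \<Rightarrow> nat \<Rightarrow> nat) \<Rightarrow> nat list \<Rightarrow> bool" where
  "sound Ora es \<longleftrightarrow> (\<forall>E\<in>set es. \<forall>p. code p = ec E \<longrightarrow> eval (Ora (el E)) p (list_decode (ea E)) (ey E))"

lemma has_sound: "has (list_encode es) l c a y \<Longrightarrow> sound Ora es \<Longrightarrow> code p = c \<Longrightarrow> eval (Ora l) p (list_decode a) y"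
  unfolding has_def sound_def by auto

lemma hasp_sound: "hasp (list_encode es) l c a \<Longrightarrow> sound Ora es \<Longrightarrow> code p = c \<Longrightarrow> \<exists>v. 0 < v \<and> eval (Ora l) p (list_decode a) v"
  unfolding hasp_def sound_def by auto

locale oracles =
  fixes A :: "nat \<Rightarrow> nat" and rs :: "nat \<Rightarrow> nat \<Rightarrow> nat" and Ora :: "nat \<Rightarrow> nat \<Rightarrow> nat"
  assumes HR: "pf (rs l x) = 0 \<Longrightarrow> Ora l x = A (ps (rs l x))"
  and HS: "pf (rs l x) \<noteq> 0 \<Longrightarrow> \<exists>p. code p = q2 (rs l x) \<and> eval (Ora (q1 (rs l x))) p [q3 (rs l x)] (Ora l x)"
begin

lemma just_sound:
  assumes J: "just A rs l c a y h (list_encode es)" and S: "sound Ora es" and C: "code p = c"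
  shows "eval (Ora l) p (list_decode a) y"
proof (cases p)
  case Z
  then show ?thesis using J C[symmetric] by (auto simp: just_def intro: eval.intros)
next
  case S
  then have "list_decode a \<noteq> [] \<and> y = Suc (hd (list_decode a))" using J C[symmetric] by (simp add: just_def)
  then show ?thesis using S by (cases "list_decode a") (auto intro: eval.intros)
next
  case (Proj i)
  then show ?thesis using J C[symmetric] by (auto simp: just_def intro: eval.intros)
next
  case (Comp f gs)
  let ?ys = "list_decode h"
  have J3: "length ?ys = length gs" "\<forall>j<length gs. has (list_encode es) l (map code gs ! j) a (?ys ! j)"
    "has (list_encode es) l (code f) h y"
    using J C[symmetric] Comp by (simp_all add: just_def)
  have "eval (Ora l) (gs ! j) (list_decode a) (?ys ! j)" if "j < length gs" for j
    using J3(2) that S by (auto intro: has_sound)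
  moreover have "eval (Ora l) f ?ys y" using J3(3) S by (rule has_sound) simp
  ultimately show ?thesis using Comp J3(1) by (auto intro: eval_Comp)
next
  case (Prec f g)
  from J C[symmetric] Prec have J4: "list_decode a \<noteq> [] \<and> (hd (list_decode a) = 0 \<and>
       has (list_encode es) l (code f) (list_encode (tl (list_decode a))) y \<or>
       hd (list_decode a) \<noteq> 0 \<and>
       has (list_encode es) l c (list_encode ((hd (list_decode a) - 1) # tl (list_decode a))) h \<and>
       has (list_encode es) l (code g) (list_encode ((hd (list_decode a) - 1) # h # tl (list_decode a))) y)"
    by (auto simp: just_def)
  then obtain n xs where a: "list_decode a = n # xs" by (cases "list_decode a") auto
  show ?thesis
  proof (cases n)
    case 0
    then have "has (list_encode es) l (code f) (list_encode xs) y" using J4 a by auto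
    then have "eval (Ora l) f xs y" using has_sound[OF _ S, of l "code f" "list_encode xs" y f] by simp
    then show ?thesis using a 0 Prec by (auto intro: eval.intros)
  next
    case (Suc m)
    then have "has (list_encode es) l c (list_encode (m # xs)) h"
        "has (list_encode es) l (code g) (list_encode (m # h # xs)) y" using J4 a by auto
    then have "eval (Ora l) p (m # xs) h" "eval (Ora l) g (m # h # xs) y"
      using has_sound[OF _ S, of l c "list_encode (m # xs)" h p]
        has_sound[OF _ S, of l "code g" "list_encode (m # h # xs)" y g] C by simp_all
    then show ?thesis using a Suc Prec by (auto intro: eval.intros)
  qed
next
  case (Mn f)
  from J C[symmetric] Mn have J5: "has (list_encode es) l (code f) (list_encode (y # list_decode a)) 0"
    "\<forall>z<y. hasp (list_encode es) l (code f) (list_encode (z # list_decode a))"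
    by (auto simp: just_def)
  have "eval (Ora l) f (y # list_decode a) 0" using has_sound[OF J5(1) S] by simp
  moreover have "\<forall>z<y. \<exists>v. 0 < v \<and> eval (Ora l) f (z # list_decode a) v"
    using J5(2) hasp_sound[OF _ S] by fastforce
  ultimately show ?thesis using Mn by (auto intro: eval.intros)
next
  case Orc
  from J C[symmetric] Orc obtain x xs where a: "list_decode a = x # xs"
    by (cases "list_decode a") (auto simp: just_def)
  let ?q = "rs l x"
  from J C[symmetric] Orc a have J6: "pf ?q = 0 \<and> y = A (ps ?q) \<or>
      pf ?q \<noteq> 0 \<and> has (list_encode es) (q1 ?q) (q2 ?q) (list_encode [q3 ?q]) y"
    by (auto simp: just_def)
  have "y = Ora l x"
  proof (cases "pf ?q = 0")
    case True then show ?thesis using J6 HR by auto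
  next
    case False
    then obtain p' where p': "code p' = q2 ?q" "eval (Ora (q1 ?q)) p' [q3 ?q] (Ora l x)" using HS by blast
    have "has (list_encode es) (q1 ?q) (q2 ?q) (list_encode [q3 ?q]) y" using J6 False by auto
    then have "eval (Ora (q1 ?q)) p' [q3 ?q] y" using has_sound[OF _ S p'(1)] by fastforce
    then show ?thesis using p'(2) eval_det by blast
  qed
  then show ?thesis using a Orc by (auto intro: eval.intros)
qed

lemma valid_sound: "valid A rs es \<Longrightarrow> sound Ora es"
proof (induct es)
  case Nil then show ?case by (simp add: sound_def)
next
  case (Cons E es)
  then have j: "justE A rs E (list_encode es)" and s: "sound Ora es" by (auto simp: valid_Cons)
  have "eval (Ora (el E)) p (list_decode (ea E)) (ey E)" if "code p = ec E" for p
    using just_sound[OF j[unfolded justE_def] s that] .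
  then show ?case using s by (auto simp: sound_def)
qed

end



lemma valid_single: "justE A rs E 0 \<Longrightarrow> valid A rs [E]"
  by (simp add: valid_Cons)

lemma has_intro: "ent l c a y h \<in> set es \<Longrightarrow> has (list_encode es) l c a y"
  unfolding has_def by (metis ent_dec list_encode_inverse)

lemma hasp_intro: "ent l c a y h \<in> set es \<Longrightarrow> 0 < y \<Longrightarrow> hasp (list_encode es) l c a"
  unfolding hasp_def by (metis ent_dec list_encode_inverse)

locale oracles_wf = oracles +
  assumes HL: "pf (rs l x) \<noteq> 0 \<Longrightarrow> q1 (rs l x) < l"
begin

definition "cert l p xs y \<longleftrightarrow> (\<exists>es h. valid A rs es \<and> ent l (code p) (list_encode xs) y h \<in> set es)"

lemma complete: "eval (Ora l) p xs y \<Longrightarrow> cert l p xs y"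
proof (induct l arbitrary: p xs y rule: less_induct)
  case (less l)
  from less.prems show ?case
  proof (induct rule: eval.induct)
    case (eval_Z xs)
    let ?E = "ent l (code Z) (list_encode xs) 0 0"
    have "valid A rs [?E]" by (rule valid_single) (simp add: justE_def just_def)
    then show ?case unfolding cert_def by (metis list.set_intros(1))
  next
    case (eval_S x xs)
    let ?E = "ent l (code S) (list_encode (x # xs)) (Suc x) 0"
    have "valid A rs [?E]" by (rule valid_single) (simp add: justE_def just_def del: list_encode.simps)
    then show ?case unfolding cert_def by (metis list.set_intros(1))
  next
    case (eval_Proj i xs)
    let ?E = "ent l (code (Proj i)) (list_encode xs) (xs ! i) 0"
    have "valid A rs [?E]" by (rule valid_single) (simp add: justE_def just_def eval_Proj)
    then show ?case unfolding cert_def by (metis list.set_intros(1))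
  next
    case (eval_Comp ys gs xs f z)
    have "\<forall>i. i < length gs \<longrightarrow> (\<exists>es. valid A rs es \<and> (\<exists>h. ent l (code (gs ! i)) (list_encode xs) (ys ! i) h \<in> set es))"
      using eval_Comp(2) unfolding cert_def by blast
    then obtain F where F: "\<And>i. i < length gs \<Longrightarrow> valid A rs (F i) \<and> (\<exists>h. ent l (code (gs ! i)) (list_encode xs) (ys ! i) h \<in> set (F i))"
      by metis
    from eval_Comp(4) obtain esf hf where f: "valid A rs esf" "ent l (code f) (list_encode ys) z hf \<in> set esf"
      unfolding cert_def by blast
    let ?rest = "esf @ concat (map F [0..<length gs])"
    let ?E = "ent l (code (Comp f gs)) (list_encode xs) z (list_encode ys)"
    have vr: "valid A rs ?rest" using f F by (auto intro!: valid_append valid_concat)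
    have h1: "has (list_encode ?rest) l (code f) (list_encode ys) z" using f by (auto intro: has_intro)
    have h2: "has (list_encode ?rest) l (map code gs ! j) (list_encode xs) (ys ! j)" if j: "j < length gs" for j
    proof -
      obtain h where "ent l (code (gs ! j)) (list_encode xs) (ys ! j) h \<in> set (F j)" using F j by blast
      then have "ent l (code (gs ! j)) (list_encode xs) (ys ! j) h \<in> set ?rest" using j by auto
      then have "has (list_encode ?rest) l (code (gs ! j)) (list_encode xs) (ys ! j)" by (rule has_intro)
      then show ?thesis using j by simp
    qed
    have "justE A rs ?E (list_encode ?rest)"
      unfolding justE_def ent_dec just_def using h1 h2 eval_Comp(1) by simp
    then have "valid A rs (?E # ?rest)" using vr by (simp add: valid_Cons)
    then show ?case unfolding cert_def by (metis list.set_intros(1))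
  next
    case (eval_Prec0 f xs y g)
    from eval_Prec0(2) obtain es h where f: "valid A rs es" "ent l (code f) (list_encode xs) y h \<in> set es"
      unfolding cert_def by blast
    let ?E = "ent l (code (Prec f g)) (list_encode (0 # xs)) y 0"
    have "has (list_encode es) l (code f) (list_encode xs) y" using f by (auto intro: has_intro)
    then have "justE A rs ?E (list_encode es)"
      unfolding justE_def ent_dec just_def by (simp del: list_encode.simps)
    then have "valid A rs (?E # es)" using f by (simp add: valid_Cons)
    then show ?case unfolding cert_def by (metis list.set_intros(1))
  next
    case (eval_PrecS f g n xs r y)
    from eval_PrecS(2) obtain es1 h1 where 1: "valid A rs es1" "ent l (code (Prec f g)) (list_encode (n # xs)) r h1 \<in> set es1"
      unfolding cert_def by blast
    from eval_PrecS(4) obtain es2 h2 where 2: "valid A rs es2" "ent l (code g) (list_encode (n # r # xs)) y h2 \<in> set es2"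
      unfolding cert_def by blast
    let ?E = "ent l (code (Prec f g)) (list_encode (Suc n # xs)) y r"
    have "has (list_encode (es1 @ es2)) l (code (Prec f g)) (list_encode (n # xs)) r"
      "has (list_encode (es1 @ es2)) l (code g) (list_encode (n # r # xs)) y"
      using 1 2 by (auto intro: has_intro)
    then have "justE A rs ?E (list_encode (es1 @ es2))"
      unfolding justE_def ent_dec just_def by (simp del: list_encode.simps)
    moreover have "valid A rs (es1 @ es2)" by (rule valid_append[OF 1(1) 2(1)])
    ultimately have "valid A rs (?E # es1 @ es2)" by (simp add: valid_Cons)
    then show ?case unfolding cert_def by (metis list.set_intros(1))
  next
    case (eval_Mn f y xs)
    from eval_Mn(2) obtain es0 h0 where 0: "valid A rs es0" "ent l (code f) (list_encode (y # xs)) 0 h0 \<in> set es0"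
      unfolding cert_def by blast
    have "\<forall>z. z < y \<longrightarrow> (\<exists>es. valid A rs es \<and> (\<exists>v h. 0 < v \<and> ent l (code f) (list_encode (z # xs)) v h \<in> set es))"
      using eval_Mn(3) unfolding cert_def by blast
    then obtain F where F: "\<And>z. z < y \<Longrightarrow> valid A rs (F z) \<and> (\<exists>v h. 0 < v \<and> ent l (code f) (list_encode (z # xs)) v h \<in> set (F z))"
      by metis
    let ?rest = "es0 @ concat (map F [0..<y])"
    let ?E = "ent l (code (Mn f)) (list_encode xs) y 0"
    have vr: "valid A rs ?rest" using 0 F by (auto intro!: valid_append valid_concat)
    have h1: "has (list_encode ?rest) l (code f) (list_encode (y # xs)) 0" using 0 by (auto intro: has_intro)
    have h2: "hasp (list_encode ?rest) l (code f) (list_encode (z # xs))" if z: "z < y" for z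
    proof -
      obtain v h where "0 < v" "ent l (code f) (list_encode (z # xs)) v h \<in> set (F z)" using F z by blast
      moreover then have "ent l (code f) (list_encode (z # xs)) v h \<in> set ?rest" using z by auto
      ultimately show ?thesis by (intro hasp_intro)
    qed
    have "justE A rs ?E (list_encode ?rest)"
      unfolding justE_def ent_dec just_def using h1 h2 by (simp del: list_encode.simps)
    then have "valid A rs (?E # ?rest)" using vr by (simp add: valid_Cons)
    then show ?case unfolding cert_def by (metis list.set_intros(1))
  next
    case (eval_Orc x xs)
    let ?q = "rs l x"
    let ?E = "ent l (code Orc) (list_encode (x # xs)) (Ora l x) 0"
    show ?case
    proof (cases "pf ?q = 0")
      case True
      then have "valid A rs [?E]"
        by (intro valid_single) (simp add: justE_def just_def HR del: list_encode.simps)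
      then show ?thesis unfolding cert_def by (metis list.set_intros(1))
    next
      case False
      then obtain p' where p': "code p' = q2 ?q" "eval (Ora (q1 ?q)) p' [q3 ?q] (Ora l x)" using HS by blast
      have "cert (q1 ?q) p' [q3 ?q] (Ora l x)" using less.hyps[OF HL[OF False] p'(2)] .
      then obtain es h where es: "valid A rs es" "ent (q1 ?q) (code p') (list_encode [q3 ?q]) (Ora l x) h \<in> set es"
        unfolding cert_def by blast
      have "has (list_encode es) (q1 ?q) (q2 ?q) (list_encode [q3 ?q]) (Ora l x)"
        using es(2) p'(1) by (auto intro: has_intro)
      then have "justE A rs ?E (list_encode es)"
        unfolding justE_def ent_dec just_def using False by (simp del: list_encode.simps)
      then have "valid A rs (?E # es)" using es by (simp add: valid_Cons)
      then show ?thesis unfolding cert_def by (metis list.set_intros(1))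
    qed
  qed
qed

end



lemma ld_ne: "list_decode a \<noteq> [] \<longleftrightarrow> a \<noteq> 0"
  by (metis list_decode_inverse list_encode.simps(1) list_encode_inverse)

lemma lhd_hd: "a \<noteq> 0 \<Longrightarrow> lhd a = hd (list_decode a)"
  by (metis ld_ne lhd_enc list.collapse list_decode_inverse)

lemma ltl_eq: "ltl a = list_encode (tl (list_decode a))"
  by (metis ltl_enc list_decode_inverse)

definition "elE E = pfE E"
definition "ecE E = pfE (psE E)"
definition "eaE E = pfE (psE (psE E))"
definition "eyE E = pfE (psE (psE (psE E)))"
definition "ehE E = psE (psE (psE (psE E)))"
lemma ev_eE[simp]: "ev A env (elE E) = el (ev A env E)" "ev A env (ecE E) = ec (ev A env E)"
  "ev A env (eaE E) = ea (ev A env E)" "ev A env (eyE E) = ey (ev A env E)" "ev A env (ehE E) = eh (ev A env E)"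
  by (simp_all add: elE_def ecE_def eaE_def eyE_def ehE_def el_def ec_def ea_def ey_def eh_def)

definition "q1E q = pfE (psE q)"
definition "q2E q = pfE (psE (psE q))"
definition "q3E q = psE (psE (psE q))"
lemma ev_qE[simp]: "ev A env (q1E E) = q1 (ev A env E)" "ev A env (q2E E) = q2 (ev A env E)"
  "ev A env (q3E E) = q3 (ev A env E)"
  by (simp_all add: q1E_def q2E_def q3E_def q1_def q2_def q3_def)

definition "MATCH = andE (eqE (elE (Var 0)) (Var 1)) (andE (eqE (ecE (Var 0)) (Var 2))
   (andE (eqE (eaE (Var 0)) (Var 3)) (eqE (eyE (Var 0)) (Var 4))))"
definition "MATCHP = andE (eqE (elE (Var 0)) (Var 1)) (andE (eqE (ecE (Var 0)) (Var 2))
   (andE (eqE (eaE (Var 0)) (Var 3)) (sgE (eyE (Var 0)))))"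

definition "hasE R l c a y = memE R MATCH [l, c, a, y]"
definition "haspE R l c a = memE R MATCHP [l, c, a]"

lemma ev_hasE[simp]: "ev A env (hasE R l c a y) = bt (has (ev A env R) (ev A env l) (ev A env c) (ev A env a) (ev A env y))"
  apply (simp add: hasE_def MATCH_def has_def)
  apply (rule arg_cong[where f = bt])
  by blast

lemma ev_haspE[simp]: "ev A env (haspE R l c a) = bt (hasp (ev A env R) (ev A env l) (ev A env c) (ev A env a))"
  apply (simp add: haspE_def MATCHP_def hasp_def)
  apply (rule arg_cong[where f = bt])
  by blast



abbreviation "tE \<equiv> pfE (Var 1)"
abbreviation "rE \<equiv> psE (Var 1)"

definition "D0 = andE (eqE tE (Num 0)) (eqE (Var 3) (Num 0))"
definition "D1 = andE (eqE tE (Num 1)) (andE (sgE (Var 2)) (eqE (Var 3) (Add (hdE (Var 2)) (Num 1))))"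
definition "D2 = andE (eqE tE (Num 2)) (andE (ltE rE (lenE (Var 2))) (eqE (Var 3) (nthE (Var 2) rE)))"
definition "Q3 = hasE (Var 4) (Var 1) (nthE (Var 5) (Var 0)) (Var 2) (nthE (Var 3) (Var 0))"
definition "D3 = andE (eqE tE (Num 3)) (andE (eqE (lenE (Var 4)) (lenE (psE rE)))
   (andE (allE (lenE (psE rE)) Q3 [Var 0, Var 2, Var 4, Var 5, psE rE])
         (hasE (Var 5) (Var 0) (pfE rE) (Var 4) (Var 3))))"
definition "D4a = andE (eqE tE (Num 4)) (andE (sgE (Var 2)) (andE (eqE (hdE (Var 2)) (Num 0))
   (hasE (Var 5) (Var 0) (pfE rE) (tlE (Var 2)) (Var 3))))"
definition "D4b = andE (eqE tE (Num 4)) (andE (sgE (Var 2)) (andE (sgE (hdE (Var 2)))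
   (andE (hasE (Var 5) (Var 0) (Var 1) (consE (Sub (hdE (Var 2)) (Num 1)) (tlE (Var 2))) (Var 4))
         (hasE (Var 5) (Var 0) (psE rE) (consE (Sub (hdE (Var 2)) (Num 1)) (consE (Var 4) (tlE (Var 2)))) (Var 3)))))"
definition "Q5 = haspE (Var 4) (Var 1) (Var 2) (consE (Var 0) (Var 3))"
definition "D5 = andE (eqE tE (Num 5)) (andE (hasE (Var 5) (Var 0) rE (consE (Var 3) (Var 2)) (Num 0))
   (allE (Var 3) Q5 [Var 0, rE, Var 2, Var 5]))"
definition "QQ RS = Call RS [Var 0, hdE (Var 2)]"
definition "D6a RS = andE (eqE tE (Num 6)) (andE (sgE (Var 2)) (andE (eqE (pfE (QQ RS)) (Num 0))
   (eqE (Var 3) (Orac (psE (QQ RS))))))"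
definition "D6b RS = andE (eqE tE (Num 6)) (andE (sgE (Var 2)) (andE (sgE (pfE (QQ RS)))
   (hasE (Var 5) (q1E (QQ RS)) (q2E (QQ RS)) (consE (q3E (QQ RS)) (Num 0)) (Var 3))))"

lemma ev_D0: "ev A [l,c,a,y,h,R] D0 = bt (pf c = 0 \<and> y = 0)"
  by (simp add: D0_def)

lemma ev_D1: "ev A [l,c,a,y,h,R] D1 = bt (pf c = 1 \<and> list_decode a \<noteq> [] \<and> y = Suc (hd (list_decode a)))"
  by (simp add: D1_def ld_ne lhd_hd cong: conj_cong)

lemma ev_D2: "ev A [l,c,a,y,h,R] D2 = bt (pf c = 2 \<and> ps c < length (list_decode a) \<and> y = list_decode a ! ps c)"
  by (simp add: D2_def ev_nthE cong: conj_cong)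

lemma ev_Q3: "z < length (list_decode L) \<Longrightarrow> z < length (list_decode h) \<Longrightarrow>
  ev A [z, l, a, h, R, L] Q3 = bt (has R l (list_decode L ! z) a (list_decode h ! z))"
  by (simp add: Q3_def ev_nthE)

lemma ev_D3: "ev A [l,c,a,y,h,R] D3 = bt (pf c = 3 \<and> length (list_decode h) = length (list_decode (ps (ps c))) \<and>
       (\<forall>j < length (list_decode (ps (ps c))). has R l (list_decode (ps (ps c)) ! j) a (list_decode h ! j)) \<and>
       has R l (pf (ps c)) h y)"
proof -
  have "(length (list_decode h) = length (list_decode (ps (ps c))) \<and>
       (\<forall>z < length (list_decode (ps (ps c))). ev A [z, l, a, h, R, ps (ps c)] Q3 \<noteq> 0)) \<longleftrightarrow>
       (length (list_decode h) = length (list_decode (ps (ps c))) \<and>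
       (\<forall>j < length (list_decode (ps (ps c))). has R l (list_decode (ps (ps c)) ! j) a (list_decode h ! j)))"
    using ev_Q3[of _ "ps (ps c)" h A l a R] by auto
  then show ?thesis by (simp add: D3_def conj_assoc[symmetric] del: conj_assoc)
qed

lemma ev_D4a: "ev A [l,c,a,y,h,R] D4a = bt (pf c = 4 \<and> list_decode a \<noteq> [] \<and> hd (list_decode a) = 0 \<and>
       has R l (pf (ps c)) (list_encode (tl (list_decode a))) y)"
  by (simp add: D4a_def ld_ne lhd_hd ltl_eq cong: conj_cong)

lemma ev_D4b: "ev A [l,c,a,y,h,R] D4b = bt (pf c = 4 \<and> list_decode a \<noteq> [] \<and> hd (list_decode a) \<noteq> 0 \<and>
       has R l c (list_encode ((hd (list_decode a) - 1) # tl (list_decode a))) h \<and>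
       has R l (ps (ps c)) (list_encode ((hd (list_decode a) - 1) # h # tl (list_decode a))) y)"
  apply (simp add: D4b_def ld_ne lhd_hd ltl_eq del: list_encode.simps cong: conj_cong)
  apply (rule arg_cong[where f = bt])
  by blast

lemma ev_D5: "ev A [l,c,a,y,h,R] D5 = bt (pf c = 5 \<and> has R l (ps c) (list_encode (y # list_decode a)) 0 \<and>
       (\<forall>z<y. hasp R l (ps c) (list_encode (z # list_decode a))))"
  by (simp add: D5_def Q5_def del: list_encode.simps)

lemma ev_D6a: "ev A [l,c,a,y,h,R] (D6a RS) = bt (pf c = 6 \<and> list_decode a \<noteq> [] \<and> pf (ev A [l, hd (list_decode a)] RS) = 0 \<and>
       y = A (ps (ev A [l, hd (list_decode a)] RS)))"
  by (simp add: D6a_def QQ_def ld_ne lhd_hd cong: conj_cong)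

lemma ev_D6b: "ev A [l,c,a,y,h,R] (D6b RS) = bt (pf c = 6 \<and> list_decode a \<noteq> [] \<and> pf (ev A [l, hd (list_decode a)] RS) \<noteq> 0 \<and>
       has R (q1 (ev A [l, hd (list_decode a)] RS)) (q2 (ev A [l, hd (list_decode a)] RS))
         (list_encode [q3 (ev A [l, hd (list_decode a)] RS)]) y)"
  by (simp add: D6b_def QQ_def ld_ne lhd_hd del: list_encode.simps cong: conj_cong)



definition "JJ RS = orE D0 (orE D1 (orE D2 (orE D3 (orE D4a (orE D4b (orE D5 (orE (D6a RS) (D6b RS))))))))"

lemma ev_JJ: "ev A [l,c,a,y,h,R] (JJ RS) = bt (just A (\<lambda>l x. ev A [l,x] RS) l c a y h R)"
  unfolding JJ_def ev_orE ev_D0 ev_D1 ev_D2 ev_D3 ev_D4a ev_D4b ev_D5 ev_D6a ev_D6b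
  by (simp only: bit_simps just_def not_not)

abbreviation "NE \<equiv> nthE (Var 1) (Var 0)"
definition "JI RS = Call (JJ RS) [elE NE, ecE NE, eaE NE, eyE NE, ehE NE, tliE (Add (Var 0) (Num 1)) (Var 1)]"

lemma ev_JI: "i < length (list_decode W) \<Longrightarrow>
  ev A [i, W] (JI RS) = bt (justE A (\<lambda>l x. ev A [l,x] RS) (list_decode W ! i) (list_encode (drop (Suc i) (list_decode W))))"
proof -
  assume i: "i < length (list_decode W)"
  have N: "ev A [i, W] NE = list_decode W ! i" using i by (subst ev_nthE) auto
  have T: "ev A [i,W] (tliE (Add (Var 0) (Num 1)) (Var 1)) = list_encode (drop (Suc i) (list_decode W))"
    by simp
  show ?thesis
    unfolding JI_def justE_def
    by (simp only: ev.simps(8) list.map N T ev_eE ev_JJ)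
qed

definition "validE RS W = allE (lenE W) (JI RS) [W]"

lemma ev_validE: "ev A env (validE RS W) = bt (valid A (\<lambda>l x. ev A [l,x] RS) (list_decode (ev A env W)))"
  unfolding validE_def valid_def
  by (simp add: ev_JI del: ev.simps)



definition "TEST RS = notE (andE (validE RS (Var 0)) (andE (sgE (Var 0)) (andE (eqE (elE (hdE (Var 0))) (Var 1))
   (andE (eqE (ecE (hdE (Var 0))) (Var 2)) (eqE (eaE (hdE (Var 0))) (consE (Var 3) (Num 0)))))))"
definition "OUT = eyE (hdE (Var 0))"

definition "uprog RS = Comp (cmp 4 OUT) [Mn (cmp 4 (TEST RS)), Proj 0, Proj 1, Proj 2]"

lemma ev_TEST: "ev A [W, l, e, x] (TEST RS) = bt (\<not> (valid A (\<lambda>l x. ev A [l,x] RS) (list_decode W) \<and> W \<noteq> 0 \<and>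
   el (lhd W) = l \<and> ec (lhd W) = e \<and> ea (lhd W) = list_encode [x]))"
  by (simp add: TEST_def ev_validE)

lemma universal:
  assumes W: "oracles_wf A (\<lambda>l x. ev A [l,x] RS) Ora"
  and E: "eval (Ora l) p [x] y"
  shows "eval A (uprog RS) [l, code p, x] y"
proof -
  interpret oracles_wf A "\<lambda>l x. ev A [l,x] RS" Ora by (rule W)
  let ?rs = "\<lambda>l x. ev A [l,x] RS"
  let ?T = "\<lambda>w. ev A [w, l, code p, x] (TEST RS)"
  from complete[OF E] obtain es h where es: "valid A ?rs es" "ent l (code p) (list_encode [x]) y h \<in> set es"
    unfolding cert_def by blast
  let ?E = "ent l (code p) (list_encode [x]) y h"
  have v: "valid A ?rs (?E # es)" using valid_dup[OF es] .
  have "?T (list_encode (?E # es)) = 0"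
    unfolding ev_TEST using v by simp
  then have ex: "\<exists>w. ?T w = 0" by blast
  define W where "W = (LEAST w. ?T w = 0)"
  have TW: "?T W = 0" unfolding W_def using LeastI_ex[OF ex] .
  have Tz: "0 < ?T z" if "z < W" for z
  proof -
    have "?T z \<noteq> 0" using not_less_Least[OF that[unfolded W_def]] .
    then show ?thesis by simp
  qed
  from TW have V: "valid A ?rs (list_decode W)" "W \<noteq> 0" "el (lhd W) = l" "ec (lhd W) = code p"
      "ea (lhd W) = list_encode [x]"
    unfolding ev_TEST by auto
  have "lhd W \<in> set (list_decode W)" using V(2) by (simp add: lhd_hd ld_ne)
  then have "\<forall>p'. code p' = ec (lhd W) \<longrightarrow> eval (Ora (el (lhd W))) p' (list_decode (ea (lhd W))) (ey (lhd W))"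
    using valid_sound[OF V(1)] unfolding sound_def by blast
  then have "eval (Ora (el (lhd W))) p (list_decode (ea (lhd W))) (ey (lhd W))"
    using V(4) by simp
  then have "eval (Ora l) p [x] (ey (lhd W))" using V by simp
  then have Y: "ey (lhd W) = y" using E eval_det by blast
  have M: "eval A (Mn (cmp 4 (TEST RS))) [l, code p, x] W"
  proof (rule eval_Mn)
    show "eval A (cmp 4 (TEST RS)) (W # [l, code p, x]) 0"
      using cmp_correct[of "W # [l, code p, x]" 4 A "TEST RS"] TW by simp
    show "\<forall>z<W. \<exists>v. 0 < v \<and> eval A (cmp 4 (TEST RS)) (z # [l, code p, x]) v"
      using cmp_correct[of "_ # [l, code p, x]" 4 A "TEST RS"] Tz by auto
  qed
  show ?thesis unfolding uprog_def
  proof (rule eval_Comp[where ys = "[W, l, code p, x]"])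
    show "\<forall>i<length [Mn (cmp 4 (TEST RS)), Proj 0, Proj 1, Proj 2].
       eval A ([Mn (cmp 4 (TEST RS)), Proj 0, Proj 1, Proj 2] ! i) [l, code p, x] ([W, l, code p, x] ! i)"
      using M by (auto simp: less_Suc_eq nth_Cons' intro: evI)
    show "eval A (cmp 4 OUT) [W, l, code p, x] y"
      using cmp_correct[of "[W, l, code p, x]" 4 A OUT] Y by (simp add: OUT_def)
  qed simp
qed



lemma app1_Some: "app1 X a b = Some c \<Longrightarrow> Phi (chi X) a b c"
  unfolding app1_def
  by (metis (mono_tags, lifting) Phi_det option.distinct(1) option.inject theI)

lemma app1_I: "Phi (chi X) a b c \<Longrightarrow> app1 X a b = Some c"
  unfolding app1_def using Phi_det by (metis (mono_tags, lifting) the_equality)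

lemma app2_I: "(\<And>n. Phi (join g h) (g 0) n (k n)) \<Longrightarrow> app2 g h = Some k"
  unfolding app2_def using Phi_det by (auto intro!: ext the_equality)

lemma app2_D: "app2 g h = Some k \<Longrightarrow> Phi (join g h) (g 0) n (k n)"
  unfolding app2_def
  by (metis (mono_tags, lifting) Phi_det option.distinct(1) option.inject theI)

lemma Phi_prog: "(\<And>m. Phi A e m (F m)) \<Longrightarrow> \<exists>p. code p = e \<and> (\<forall>m. eval A p [m] (F m))"
proof -
  assume H: "\<And>m. Phi A e m (F m)"
  from H[of 0] obtain p where p: "code p = e" unfolding Phi_def by blast
  have "eval A p [m] (F m)" for m
  proof -
    from H[of m] obtain p' where "code p' = e" "eval A p' [m] (F m)" unfolding Phi_def by blast
    then show ?thesis using p code_inj by metis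
  qed
  then show ?thesis using p by blast
qed

lemma Phi_I: "eval A p [m] y \<Longrightarrow> Phi A (code p) m y"
  unfolding Phi_def by blast

lemma eval_cmp: "length env = k \<Longrightarrow> y = ev A env e \<Longrightarrow> eval A (cmp k e) env y"
  using cmp_correct by blast



definition "RS1 = peE (Num 0) (Add (Mul (Num 2) (Var 1)) (Num 4))"
definition "OUTP = iteE (eqE (Var 0) (Num 1)) (Var 1) (Orac (Mul (Num 2) (Var 0)))"
definition "Pprog = Comp (cmp 2 OUTP) [Proj 0, Comp (uprog RS1) [Z, Comp Orc [numprog 2], Comp Orc [numprog 3]]]"
definition "fE X a n = (if n = 0 then code Pprog else if n = 1 then a else chi X (n - 2))"

lemma eval_list3: "eval A g1 xs y1 \<Longrightarrow> eval A g2 xs y2 \<Longrightarrow> eval A g3 xs y3 \<Longrightarrow> eval A f [y1, y2, y3] z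
   \<Longrightarrow> eval A (Comp f [g1, g2, g3]) xs z"
  by (rule eval_Comp[of "[y1, y2, y3]"]) (auto simp: less_Suc_eq nth_Cons')

lemma le_to_emb:
  assumes "turing_le X Y"
  shows "\<exists>f. embedding_K1_K2 X Y f"
proof -
  from assms obtain e where "\<And>m. Phi (chi Y) e m (chi X m)" unfolding turing_le_def by blast
  then obtain q where q: "\<And>m. eval (chi Y) q [m] (chi X m)" using Phi_prog by blast
  let ?f = "fE X"
  have carrier: "?f a \<in> K2_carrier Y" for a
  proof -
    define FEX where "FEX = iteE (eqE (Var 0) (Num 0)) (Num (code Pprog)) (iteE (eqE (Var 0) (Num 1)) (Num a) (Var 1))"
    define FA where "FA = Comp (cmp 2 FEX) [Proj 0, Comp q [cmp 1 (Sub (Var 0) (Num 2))]]"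
    have "eval (chi Y) FA [n] (?f a n)" for n
      unfolding FA_def
    proof (rule eval_comp2)
      show "eval (chi Y) (Proj 0) [n] n" by (auto intro: evI)
      show "eval (chi Y) (Comp q [cmp 1 (Sub (Var 0) (Num 2))]) [n] (chi X (n - 2))"
        by (rule eval_comp1[OF _ q]) (rule eval_cmp; simp)
      show "eval (chi Y) (cmp 2 FEX) [n, chi X (n - 2)] (fE X a n)"
        by (rule eval_cmp) (auto simp: FEX_def fE_def)
    qed
    then show ?thesis unfolding K2_carrier_def Phi_def by blast
  qed
  have inj: "inj ?f"
  proof (rule injI)
    fix a b assume "?f a = ?f b"
    then have "?f a 1 = ?f b 1" by simp
    then show "a = b" by (simp add: fE_def)
  qed
  have app: "app2 (?f a) (?f b) = Some (?f c)" if ab: "app1 X a b = Some c" for a b c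
  proof -
    from app1_Some[OF ab] obtain p where p: "code p = a" "eval (chi X) p [b] c" unfolding Phi_def by blast
    let ?O = "join (?f a) (?f b)"
    have W: "oracles_wf ?O (\<lambda>l x. ev ?O [l,x] RS1) (\<lambda>l. chi X)"
      by unfold_locales (auto simp: RS1_def join_def fE_def)
    have U: "eval ?O (uprog RS1) [0, a, b] c"
      using universal[OF W, where l=0 and p=p and x=b and y=c] p by simp
    have "eval ?O Pprog [n] (?f c n)" for n
      unfolding Pprog_def
    proof (rule eval_comp2)
      show "eval ?O (Proj 0) [n] n" by (auto intro: evI)
      show "eval ?O (Comp (uprog RS1) [Z, Comp Orc [numprog 2], Comp Orc [numprog 3]]) [n] c"
      proof (rule eval_list3[OF _ _ _ U])
        show "eval ?O Z [n] 0" by (rule eval_Z)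
        show "eval ?O (Comp Orc [numprog 2]) [n] a"
          by (rule eval_comp1[OF eval_numprog]) (use eval_Orc[of ?O 2 "[]"] in \<open>simp add: join_def fE_def\<close>)
        show "eval ?O (Comp Orc [numprog 3]) [n] b"
          by (rule eval_comp1[OF eval_numprog]) (use eval_Orc[of ?O 3 "[]"] in \<open>simp add: join_def fE_def\<close>)
      qed
      show "eval ?O (cmp 2 OUTP) [n, c] (?f c n)"
        by (rule eval_cmp) (auto simp: OUTP_def join_def fE_def)
    qed
    then have "Phi ?O (?f a 0) n (?f c n)" for n by (simp add: fE_def Phi_I)
    then show ?thesis by (rule app2_I)
  qed
  have "embedding_K1_K2 X Y ?f"
    unfolding embedding_K1_K2_def using carrier inj app by blast
  then show ?thesis by blast
qed



definition "parE x = Call (Rec (Var 0) (Num 0) (Sub (Num 1) (Var 1))) [x]"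
definition "div2E x = Call (Rec (Var 0) (Num 0) (Add (Var 1) (parE (Var 0)))) [x]"

lemma rec_par: "rec_nat 0 (\<lambda>i r. 1 - r) n = n mod 2"
  by (induct n) (auto simp: mod_Suc)

lemma ev_parE[simp]: "ev A env (parE x) = ev A env x mod 2"
  using rec_par by (simp add: parE_def)

lemma rec_div2: "rec_nat 0 (\<lambda>i r. r + i mod 2) n = n div 2"
  by (induct n) (auto, presburger)

lemma ev_div2E[simp]: "ev A env (div2E x) = ev A env x div 2"
  using rec_div2 by (simp add: div2E_def)

definition "RS2 cS cE c0 cR =
 iteE (ltE (Var 0) (Num 2)) (peE (Num 0) (Var 1))
  (peE (Num 1)
    (iteE (eqE (parE (Var 1)) (Num 0))
       (peE (Num 0) (peE (iteE (eqE (parE (Var 0)) (Num 0)) (Num cS) (Num cE)) (div2E (Var 1))))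
       (iteE (eqE (div2E (Var 0)) (Num 1))
          (peE (Num 0) (peE (Num c0) (div2E (Var 1))))
          (peE (Mul (Num 2) (Sub (div2E (Var 0)) (Num 1))) (peE (Num cR) (div2E (Var 1)))))))"

lemma ev_RS2: "ev A [L, x] (RS2 cS cE c0 cR) =
  (if L < 2 then prod_encode (0, x) else prod_encode (1,
     if x mod 2 = 0 then prod_encode (0, prod_encode (if L mod 2 = 0 then cS else cE, x div 2))
     else if L div 2 = 1 then prod_encode (0, prod_encode (c0, x div 2))
     else prod_encode (2 * (L div 2 - 1), prod_encode (cR, x div 2))))"
  by (simp add: RS2_def)

lemma q_simps[simp]: "q1 (prod_encode (t, prod_encode (a, prod_encode (b, c)))) = a"
  "q2 (prod_encode (t, prod_encode (a, prod_encode (b, c)))) = b"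
  "q3 (prod_encode (t, prod_encode (a, prod_encode (b, c)))) = c"
  by (simp_all add: q1_def q2_def q3_def)

lemma Phi_code: "Phi A e m y \<Longrightarrow> code p = e \<Longrightarrow> eval A p [m] y"
  unfolding Phi_def using code_inj by blast

lemma emb_to_le:
  assumes E: "embedding_K1_K2 X Y f"
  shows "turing_le X Y"
proof -
  have car: "\<And>n. f n \<in> K2_carrier Y" and inj: "inj f"
    and app: "\<And>a b c. app1 X a b = Some c \<Longrightarrow> app2 (f a) (f b) = Some (f c)"
    using E unfolding embedding_K1_K2_def by blast+
  have prog: "\<exists>p. \<forall>n. eval (chi Y) p [n] (f a n)" for a
  proof -
    from car[of a] obtain e where "\<And>n. Phi (chi Y) e n (f a n)" unfolding K2_carrier_def by blast
    then show ?thesis using Phi_prog by blast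
  qed
  obtain pS where pS: "\<And>n. eval (chi Y) pS [n] (f (code S) n)" using prog by blast
  obtain pE where pE: "\<And>n. eval (chi Y) pE [n] (f (code Orc) n)" using prog by blast
  obtain p0 where p0: "\<And>n. eval (chi Y) p0 [n] (f 0 n)" using prog by blast
  let ?gs = "f (code S)" and ?ge = "f (code Orc)"
  have aS: "app2 ?gs (f m) = Some (f (Suc m))" for m
    by (rule app, rule app1_I, rule Phi_I, rule eval_S)
  have aE: "app2 ?ge (f m) = Some (f (chi X m))" for m
    by (rule app, rule app1_I, rule Phi_I, rule eval_Orc)
  obtain Rs where Rs: "code Rs = ?gs 0" using app2_D[OF aS[of 0], of 0] unfolding Phi_def by blast
  have Rs': "eval (join ?gs (f m)) Rs [n] (f (Suc m) n)" for m n
    using Phi_code[OF app2_D[OF aS[of m]] Rs] .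
  obtain Re where Re: "code Re = ?ge 0" using app2_D[OF aE[of 0], of 0] unfolding Phi_def by blast
  have Re': "eval (join ?ge (f m)) Re [n] (f (chi X m) n)" for m n
    using Phi_code[OF app2_D[OF aE[of m]] Re] .
  define Ora where "Ora L = (if L < 2 then chi Y else join (if L mod 2 = 0 then ?gs else ?ge) (f (L div 2 - 1)))" for L
  let ?RS = "RS2 (code pS) (code pE) (code p0) (code Rs)"
  have W: "oracles_wf (chi Y) (\<lambda>L x. ev (chi Y) [L, x] ?RS) Ora"
  proof
    fix l x
    show "pf (ev (chi Y) [l, x] ?RS) = 0 \<Longrightarrow> Ora l x = chi Y (ps (ev (chi Y) [l, x] ?RS))"
      by (auto simp: ev_RS2 Ora_def split: if_splits)
    show "pf (ev (chi Y) [l, x] ?RS) \<noteq> 0 \<Longrightarrow> q1 (ev (chi Y) [l, x] ?RS) < l"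
      by (auto simp: ev_RS2)
    show "pf (ev (chi Y) [l, x] ?RS) \<noteq> 0 \<Longrightarrow> \<exists>p. code p = q2 (ev (chi Y) [l, x] ?RS) \<and>
       eval (Ora (q1 (ev (chi Y) [l, x] ?RS))) p [q3 (ev (chi Y) [l, x] ?RS)] (Ora l x)"
    proof -
      assume "pf (ev (chi Y) [l, x] ?RS) \<noteq> 0"
      then have l2: "\<not> l < 2" by (auto simp: ev_RS2)
      show ?thesis
      proof (cases "x mod 2 = 0")
        case True
        then show ?thesis using l2 pS pE by (auto simp: ev_RS2 Ora_def join_def)
      next
        case False
        show ?thesis
        proof (cases "l div 2 = 1")
          case True
          then show ?thesis using l2 False p0 by (auto simp: ev_RS2 Ora_def join_def)
        next
          case F2: False
          have o: "Ora (2 * (l div 2 - 1)) = join ?gs (f (l div 2 - 1 - 1))"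
            using l2 F2 by (auto simp: Ora_def)
          have "eval (Ora (2 * (l div 2 - 1))) Rs [x div 2] (f (l div 2 - 1) (x div 2))"
          proof -
            have "Suc (l div 2 - 1 - 1) = l div 2 - 1" using l2 F2 by presburger
            then show ?thesis unfolding o using Rs'[of "l div 2 - 1 - 1" "x div 2"] by simp
          qed
          then show ?thesis using l2 False F2 by (auto simp: ev_RS2 Ora_def join_def)
        qed
      qed
    qed
  qed
  let ?U = "uprog ?RS"
  have U: "eval (chi Y) ?U [2 * m + 3, code Re, d] (f (chi X m) d)" for m d
  proof -
    have "Ora (2 * m + 3) = join ?ge (f m)" by (simp add: Ora_def)
    then have "eval (Ora (2 * m + 3)) Re [d] (f (chi X m) d)" using Re' by simp
    then show ?thesis by (rule universal[OF W])
  qed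
  have "f 0 \<noteq> f 1" using inj by (auto dest: injD)
  then obtain d where d: "f 0 d \<noteq> f 1 d" by auto
  define FP where "FP = Comp (cmp 2 (eqE (Var 1) (Num (f 1 d))))
     [Proj 0, Comp ?U [cmp 1 (Add (Mul (Num 2) (Var 0)) (Num 3)), numprog (code Re), numprog d]]"
  have "eval (chi Y) FP [m] (chi X m)" for m
    unfolding FP_def
  proof (rule eval_comp2)
    show "eval (chi Y) (Proj 0) [m] m" by (auto intro: evI)
    show "eval (chi Y) (Comp ?U [cmp 1 (Add (Mul (Num 2) (Var 0)) (Num 3)), numprog (code Re), numprog d]) [m] (f (chi X m) d)"
      by (rule eval_list3[OF _ eval_numprog eval_numprog U]) (rule eval_cmp; simp)
    show "eval (chi Y) (cmp 2 (eqE (Var 1) (Num (f 1 d)))) [m, f (chi X m) d] (chi X m)"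
      by (rule eval_cmp) (use d in \<open>auto simp: chi_def bt_def\<close>)
  qed
  then show ?thesis unfolding turing_le_def by (blast intro: Phi_I)
qed

theorem theorem6p7:
  fixes X Y :: "nat set"
  shows "(\<exists>f. embedding_K1_K2 X Y f) \<longleftrightarrow> turing_le X Y"
  using emb_to_le le_to_emb by blast

end
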